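(* Let $E$ be a directed graph and let the graph inverse semigroup $G(E)$ carry a Hausdorff topology making it a topological semigroup. Then $G(E)$ embeds (as a subsemigroup and topological subspace) into a compact topological semigroup $S$ if and only if $G(E)$ is compact.
   Context: All spaces are Hausdorff. A directed graph $E=(E^0,E^1,r,s)$ has vertices $E^0$, edges $E^1$, and source/range maps $s,r:E^1\to E^0$; paths are vertices and sequences of edges $e_1\ldots e_n$ with $r(e_i)=s(e_{i+1})$. The graph inverse semigroup $G(E)$ is the semigroup with zero $0$ generated by $E^0$, $E^1$, $E^{-1}=\{e^{-1}\mid e\in E^1\}$ subject to: for $a,b\in E^0$, $e,f\in E^1$: $ab=a$ if $a=b$, else $0$; $s(e)e=er(e)=e$; $e^{-1}s(e)=r(e)e^{-1}=e^{-1}$; $e^{-1}f=r(e)$ if $e=f$, else $0$. Non-zero elements are uniquely $uv^{-1}$ with $u,v$ paths and $r(u)=r(v)$. *)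

theory Defs
  imports "HOL-Analysis.Analysis"
begin

text \<open>A path is represented as a pair (v, es): a start vertex v and a list of edges es.
The empty list represents the vertex v itself; otherwise v is the source of the
first edge and consecutive edges are composable.\<close>

type_synonym ('v,'e) path = "'v \<times> 'e list"

definition is_path :: "'v set \<Rightarrow> 'e set \<Rightarrow> ('e \<Rightarrow> 'v) \<Rightarrow> ('e \<Rightarrow> 'v) \<Rightarrow> ('v,'e) path \<Rightarrow> bool" where
  "is_path V Ed s r p \<longleftrightarrow>
     fst p \<in> V \<and> set (snd p) \<subseteq> Ed \<and>
     (snd p \<noteq> [] \<longrightarrow> s (hd (snd p)) = fst p) \<and>
     (\<forall>i. Suc i < length (snd p) \<longrightarrow> r (snd p ! i) = s (snd p ! Suc i))"

definition path_range :: "('e \<Rightarrow> 'v) \<Rightarrow> ('v,'e) path \<Rightarrow> 'v" where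
  "path_range r p = (if snd p = [] then fst p else r (last (snd p)))"

text \<open>Elements of the graph inverse semigroup: zero, or u v^{-1} (normal form).\<close>
datatype ('v,'e) gis = GZero | GElem "('v,'e) path" "('v,'e) path"

definition gis_carrier :: "'v set \<Rightarrow> 'e set \<Rightarrow> ('e \<Rightarrow> 'v) \<Rightarrow> ('e \<Rightarrow> 'v) \<Rightarrow> ('v,'e) gis set" where
  "gis_carrier V Ed s r =
     insert GZero {GElem u v | u v. is_path V Ed s r u \<and> is_path V Ed s r v \<and>
                                     path_range r u = path_range r v}"

text \<open>Multiplication in normal form:
  (u v^{-1})(w z^{-1}) = u t z^{-1} if w = v t;  u (z t)^{-1} if v = w t;  0 otherwise.\<close>
fun gis_mult :: "('v,'e) gis \<Rightarrow> ('v,'e) gis \<Rightarrow> ('v,'e) gis" where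
  "gis_mult (GElem u v) (GElem w z) =
     (if fst w = fst v \<and> (\<exists>t. snd w = snd v @ t)
      then GElem (fst u, snd u @ drop (length (snd v)) (snd w)) z
      else if fst v = fst w \<and> (\<exists>t. snd v = snd w @ t)
      then GElem u (fst z, snd z @ drop (length (snd w)) (snd v))
      else GZero)"
| "gis_mult _ _ = GZero"

definition top_semigroup :: "'b topology \<Rightarrow> ('b \<Rightarrow> 'b \<Rightarrow> 'b) \<Rightarrow> bool" where
  "top_semigroup \<sigma> m \<longleftrightarrow>
     Hausdorff_space \<sigma> \<and>
     (\<forall>x\<in>topspace \<sigma>. \<forall>y\<in>topspace \<sigma>. m x y \<in> topspace \<sigma>) \<and>
     (\<forall>x\<in>topspace \<sigma>. \<forall>y\<in>topspace \<sigma>. \<forall>z\<in>topspace \<sigma>. m (m x y) z = m x (m y z)) \<and>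
     continuous_map (prod_topology \<sigma> \<sigma>) \<sigma> (\<lambda>(x,y). m x y)"

definition embeds_in_compact_top_semigroup ::
  "'a topology \<Rightarrow> ('a \<Rightarrow> 'a \<Rightarrow> 'a) \<Rightarrow> 'b topology \<Rightarrow> ('b \<Rightarrow> 'b \<Rightarrow> 'b) \<Rightarrow> ('a \<Rightarrow> 'b) \<Rightarrow> bool" where
  "embeds_in_compact_top_semigroup \<tau> mul \<sigma> m h \<longleftrightarrow>
     top_semigroup \<sigma> m \<and> compact_space \<sigma> \<and>
     embedding_map \<tau> \<sigma> h \<and>
     (\<forall>x\<in>topspace \<tau>. \<forall>y\<in>topspace \<tau>. h (mul x y) = m (h x) (h y))"

end

theory Submission
  imports Defs
begin

definition rep :: "('v,'e) gis \<Rightarrow> ('v,'e) path \<Rightarrow> ('v,'e) path option" where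
  "rep x p = (case x of GZero \<Rightarrow> None
     | GElem u v \<Rightarrow> (if fst p = fst v \<and> (\<exists>t. snd p = snd v @ t)
                     then Some (fst u, snd u @ drop (length (snd v)) (snd p)) else None))"

lemma rep_mult: "rep (gis_mult x y) = rep x \<circ>\<^sub>m rep y"
proof (cases x)
  case GZero then show ?thesis by (auto simp: rep_def map_comp_def fun_eq_iff split: option.split)
next
  case (GElem u v) note x = this
  show ?thesis
  proof (cases y)
    case GZero then show ?thesis by (cases x) (auto simp: rep_def map_comp_def fun_eq_iff)
  next
    case (GElem w z) note y = this
    show ?thesis
    proof (rule ext)
      fix p
      show "rep (gis_mult x y) p = (rep x \<circ>\<^sub>m rep y) p"
      proof (cases "fst w = fst v \<and> (\<exists>t. snd w = snd v @ t)")
        case True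
        then obtain t0 where t0: "fst w = fst v" "snd w = snd v @ t0" by auto
        have m: "gis_mult x y = GElem (fst u, snd u @ t0) z" using t0 by (simp add: x y)
        show ?thesis unfolding m by (auto simp: rep_def map_comp_def x y t0)
      next
        case c1: False
        show ?thesis
        proof (cases "fst v = fst w \<and> (\<exists>t. snd v = snd w @ t)")
          case True
          then obtain t0 where t0: "fst v = fst w" "snd v = snd w @ t0" by auto
          have m: "gis_mult x y = GElem u (fst z, snd z @ t0)" using t0 c1 by (simp add: x y)
          show ?thesis unfolding m by (auto simp: rep_def map_comp_def x y t0)
        next
          case False
          have m: "gis_mult x y = GZero" using False c1 by (simp add: x y)
          have "(rep x \<circ>\<^sub>m rep y) p = None"
            using False c1 by (auto simp: rep_def map_comp_def x y append_eq_append_conv2) (metis append_eq_append_conv2)+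
          then show ?thesis unfolding m by (simp add: rep_def)
        qed
      qed
    qed
  qed
qed

lemma rep_GElem_self: "rep (GElem u v) v = Some u"
  by (simp add: rep_def)

lemma rep_inj: assumes "rep x = rep y" shows "x = y"
proof (cases x)
  case GZero then show ?thesis using assms
    by (cases y) (auto simp: rep_def fun_eq_iff split: if_splits)
next
  case (GElem u v) note x = this
  show ?thesis
  proof (cases y)
    case GZero then show ?thesis using assms x rep_GElem_self[of u v] by (simp add: rep_def)
  next
    case (GElem u' v') note y = this
    have a: "rep y v = Some u" using assms x rep_GElem_self by metis
    have b: "rep x v' = Some u'" using assms y rep_GElem_self by metis
    from a obtain t where t: "fst v = fst v'" "snd v = snd v' @ t"
      by (auto simp: rep_def y split: if_splits)
    from b obtain t' where t': "snd v' = snd v @ t'"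
      by (auto simp: rep_def x split: if_splits)
    have "v = v'" using t t' by (simp add: prod_eq_iff)
    then show ?thesis using a by (simp add: rep_def x y prod_eq_iff)
  qed
qed

lemma gis_assoc: "gis_mult (gis_mult x y) z = gis_mult x (gis_mult y z)"
  by (rule rep_inj) (simp add: rep_mult map_comp_def fun_eq_iff split: option.split)

lemma path_range_append:
  "t \<noteq> [] \<Longrightarrow> path_range r (a, l @ t) = path_range r (path_range r (a,l), t)"
  by (simp add: path_range_def)

lemma path_range_append2:
  "path_range r (a, l @ t) = path_range r (path_range r (a,l), t)"
  by (cases "t = []") (auto simp: path_range_def)

lemma is_path_append:
  assumes "is_path V Ed s r (a, l)" "is_path V Ed s r (path_range r (a,l), t)"
  shows "is_path V Ed s r (a, l @ t)"
  unfolding is_path_def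
proof (intro conjI allI impI)
  show "fst (a, l @ t) \<in> V" using assms(1) by (simp add: is_path_def)
  show "set (snd (a, l @ t)) \<subseteq> Ed" using assms by (auto simp: is_path_def)
  show "s (hd (snd (a, l @ t))) = fst (a, l @ t)" if "snd (a, l @ t) \<noteq> []"
    using assms that by (cases l) (auto simp: is_path_def path_range_def)
  fix i assume i: "Suc i < length (snd (a, l @ t))"
  show "r (snd (a, l @ t) ! i) = s (snd (a, l @ t) ! Suc i)"
  proof (cases "Suc i < length l")
    case True then show ?thesis using assms(1) by (auto simp: is_path_def nth_append)
  next
    case False
    show ?thesis
    proof (cases "Suc i = length l")
      case True
      then have "l \<noteq> []" by auto
      then have "l ! i = last l" using True by (metis diff_Suc_1 last_conv_nth)
      moreover have "t \<noteq> []" using i True by auto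
      ultimately show ?thesis using True assms(2) \<open>l \<noteq> []\<close>
        by (auto simp: is_path_def nth_append path_range_def hd_conv_nth)
    next
      case False
      then have "length l \<le> i" using \<open>\<not> Suc i < length l\<close> by auto
      then show ?thesis using assms(2) i
        using spec[OF conjunct2[OF conjunct2[OF conjunct2[OF assms(2)[unfolded is_path_def]]]], of "i - length l"]
        by (auto simp: nth_append Suc_diff_le)
    qed
  qed
qed

lemma is_path_split:
  assumes "r ` Ed \<subseteq> V" "is_path V Ed s r (a, l @ t)"
  shows "is_path V Ed s r (a, l)" "is_path V Ed s r (path_range r (a,l), t)"
proof -
  have P: "\<And>i. Suc i < length (l @ t) \<Longrightarrow> r ((l@t) ! i) = s ((l@t) ! Suc i)"
    using assms(2) by (simp add: is_path_def)
  show "is_path V Ed s r (a, l)"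
    unfolding is_path_def
  proof (intro conjI allI impI)
    show "fst (a, l) \<in> V" "set (snd (a, l)) \<subseteq> Ed" using assms(2) by (auto simp: is_path_def)
    show "s (hd (snd (a, l))) = fst (a, l)" if "snd (a, l) \<noteq> []" using assms(2) that by (auto simp: is_path_def)
    fix i assume "Suc i < length (snd (a, l))"
    then show "r (snd (a, l) ! i) = s (snd (a, l) ! Suc i)" using P[of i] by (auto simp: nth_append)
  qed
  show "is_path V Ed s r (path_range r (a,l), t)"
    unfolding is_path_def
  proof (intro conjI allI impI)
    show "fst (path_range r (a,l), t) \<in> V"
    proof (cases "l = []")
      case True then show ?thesis using assms(2) by (simp add: is_path_def path_range_def)
    next
      case False then have "last l \<in> Ed" using assms(2) by (auto simp: is_path_def)
      then show ?thesis using False assms(1) by (auto simp: path_range_def)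
    qed
    show "set (snd (path_range r (a,l), t)) \<subseteq> Ed" using assms(2) by (auto simp: is_path_def)
    show "s (hd (snd (path_range r (a,l), t))) = fst (path_range r (a,l), t)" if "snd (path_range r (a,l), t) \<noteq> []"
    proof (cases "l = []")
      case True then show ?thesis using assms(2) that by (simp add: is_path_def path_range_def)
    next
      case False
      have "Suc (length l - 1) < length (l @ t)" using that False by auto
      from P[OF this] show ?thesis using False that
        by (auto simp: path_range_def nth_append last_conv_nth hd_conv_nth)
    qed
    fix i assume "Suc i < length (snd (path_range r (a,l), t))"
    then show "r (snd (path_range r (a,l), t) ! i) = s (snd (path_range r (a,l), t) ! Suc i)"
      using P[of "length l + i"] by (auto simp: nth_append)
  qed
qed

lemma gis_mult_closed:
  assumes g: "r ` Ed \<subseteq> V" and x: "x \<in> gis_carrier V Ed s r" and y: "y \<in> gis_carrier V Ed s r"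
  shows "gis_mult x y \<in> gis_carrier V Ed s r"
proof (cases "x = GZero \<or> y = GZero")
  case True then show ?thesis by (cases x; cases y) (auto simp: gis_carrier_def)
next
  case False
  then obtain u v w z where xy: "x = GElem u v" "y = GElem w z"
    and pu: "is_path V Ed s r u" and pv: "is_path V Ed s r v" and ruv: "path_range r u = path_range r v"
    and pw: "is_path V Ed s r w" and pz: "is_path V Ed s r z" and rwz: "path_range r w = path_range r z"
    using x y by (auto simp: gis_carrier_def)
  show ?thesis
  proof (cases "fst w = fst v \<and> (\<exists>t. snd w = snd v @ t)")
    case True
    then obtain t0 where t0: "fst w = fst v" "snd w = snd v @ t0" by auto
    have m: "gis_mult x y = GElem (fst u, snd u @ t0) z" using t0 by (simp add: xy)
    have w: "w = (fst v, snd v @ t0)" using t0 by (simp add: prod_eq_iff)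
    have "is_path V Ed s r (path_range r (fst v, snd v), t0)"
      using is_path_split(2)[OF g, of s "fst v" "snd v" t0] pw w by simp
    then have "is_path V Ed s r (path_range r (fst u, snd u), t0)" using ruv by simp
    then have p1: "is_path V Ed s r (fst u, snd u @ t0)" using is_path_append[of V Ed s r "fst u" "snd u" t0] pu by simp
    have "path_range r (fst u, snd u @ t0) = path_range r z"
      using rwz w ruv by (simp add: path_range_append2)
    then show ?thesis using m p1 pz unfolding gis_carrier_def by blast
  next
    case c1: False
    show ?thesis
    proof (cases "fst v = fst w \<and> (\<exists>t. snd v = snd w @ t)")
      case True
      then obtain t0 where t0: "fst v = fst w" "snd v = snd w @ t0" by auto
      have m: "gis_mult x y = GElem u (fst z, snd z @ t0)" using t0 c1 by (simp add: xy)
      have v: "v = (fst w, snd w @ t0)" using t0 by (simp add: prod_eq_iff)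
      have "is_path V Ed s r (path_range r (fst w, snd w), t0)"
        using is_path_split(2)[OF g, of s "fst w" "snd w" t0] pv v by simp
      then have "is_path V Ed s r (path_range r (fst z, snd z), t0)" using rwz by simp
      then have p1: "is_path V Ed s r (fst z, snd z @ t0)" using is_path_append[of V Ed s r "fst z" "snd z" t0] pz by simp
      have "path_range r (fst z, snd z @ t0) = path_range r u"
        using rwz v ruv by (simp add: path_range_append2)
      then show ?thesis using m p1 pu unfolding gis_carrier_def by (metis (mono_tags, lifting) CollectI insertCI)
    next
      case False
      then have "gis_mult x y = GZero" using c1 by (simp add: xy)
      then show ?thesis by (simp add: gis_carrier_def)
    qed
  qed
qed

lemma ts_cont2:
  assumes ts: "top_semigroup \<sigma> m" and f: "continuous_map X \<sigma> f" and g: "continuous_map X \<sigma> g"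
  shows "continuous_map X \<sigma> (\<lambda>x. m (f x) (g x))"
proof -
  have c: "continuous_map (prod_topology \<sigma> \<sigma>) \<sigma> (\<lambda>(x,y). m x y)" using ts by (simp add: top_semigroup_def)
  have "continuous_map X \<sigma> ((\<lambda>(x,y). m x y) \<circ> (\<lambda>x. (f x, g x)))"
    by (rule continuous_map_compose[OF continuous_map_pairedI[OF f g] c])
  then show ?thesis by (simp add: o_def)
qed

lemma ts_nbhd:
  assumes ts: "top_semigroup \<sigma> m" and W: "openin \<sigma> W" "m p p \<in> W" and p: "p \<in> topspace \<sigma>"
  shows "\<exists>U. openin \<sigma> U \<and> p \<in> U \<and> (\<forall>x\<in>U. \<forall>y\<in>U. m x y \<in> W)"
proof -
  have c: "continuous_map (prod_topology \<sigma> \<sigma>) \<sigma> (\<lambda>(x,y). m x y)" using ts by (simp add: top_semigroup_def)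
  then have o: "openin (prod_topology \<sigma> \<sigma>) {q \<in> topspace (prod_topology \<sigma> \<sigma>). (\<lambda>(x,y). m x y) q \<in> W}"
    using W(1) by (simp add: continuous_map_def)
  have pp: "(p,p) \<in> {q \<in> topspace (prod_topology \<sigma> \<sigma>). (\<lambda>(x,y). m x y) q \<in> W}" using p W by simp
  obtain U1 U2 where "openin \<sigma> U1" "openin \<sigma> U2" "p \<in> U1" "p \<in> U2"
    "U1 \<times> U2 \<subseteq> {q \<in> topspace (prod_topology \<sigma> \<sigma>). (\<lambda>(x,y). m x y) q \<in> W}"
    using openin_prod_topology_alt[THEN iffD1, OF o, rule_format, OF pp] by blast
  then show ?thesis by (intro exI[of _ "U1 \<inter> U2"]) auto
qed

lemma orth_limit:
  assumes ts: "top_semigroup \<sigma> m" and D: "D \<subseteq> topspace \<sigma>" and z: "z \<in> topspace \<sigma>"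
    and idem: "\<forall>d\<in>D. m d d = d" and orth: "\<forall>d\<in>D. \<forall>d'\<in>D. d \<noteq> d' \<longrightarrow> m d d' = z"
    and acc: "\<And>d. p \<in> \<sigma> closure_of (D - {d})"
  shows "p = z"
proof -
  have H: "Hausdorff_space \<sigma>" using ts by (simp add: top_semigroup_def)
  have p: "p \<in> topspace \<sigma>" using acc[of z] by (simp add: in_closure_of)
  have q: "m p p \<in> topspace \<sigma>" using ts p by (simp add: top_semigroup_def)
  have meet: "\<And>d U. openin \<sigma> U \<Longrightarrow> p \<in> U \<Longrightarrow> \<exists>y. y \<in> D - {d} \<and> y \<in> U"
    using acc unfolding in_closure_of by blast
  have 1: "m p p = p"
  proof (rule ccontr)
    assume ne: "m p p \<noteq> p"
    then obtain W W' where W: "openin \<sigma> W" "openin \<sigma> W'" "m p p \<in> W" "p \<in> W'" "disjnt W W'"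
      using H p q unfolding Hausdorff_space_def by metis
    obtain U where U: "openin \<sigma> U" "p \<in> U" "\<forall>x\<in>U. \<forall>y\<in>U. m x y \<in> W"
      using ts_nbhd[OF ts W(1) W(3) p] by blast
    obtain d0 where "d0 \<in> D - {z}" "d0 \<in> U \<inter> W'" using meet[of "U \<inter> W'" z] U W by auto
    then have "m d0 d0 \<in> W" "m d0 d0 = d0" "d0 \<in> W'" using U(3) idem by blast+
    then show False using W(5) by (auto simp: disjnt_def)
  qed
  have 2: "m p p = z"
  proof (rule ccontr)
    assume ne: "m p p \<noteq> z"
    then obtain W W' where W: "openin \<sigma> W" "openin \<sigma> W'" "m p p \<in> W" "z \<in> W'" "disjnt W W'"
      using H z q unfolding Hausdorff_space_def by metis
    obtain U where U: "openin \<sigma> U" "p \<in> U" "\<forall>x\<in>U. \<forall>y\<in>U. m x y \<in> W"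
      using ts_nbhd[OF ts W(1) W(3) p] by blast
    obtain d0 where d0: "d0 \<in> D - {z}" "d0 \<in> U" using meet[of U z] U by auto
    obtain d1 where d1: "d1 \<in> D - {d0}" "d1 \<in> U" using meet[of U d0] U by auto
    have "m d0 d1 = z" using orth d0 d1 by auto
    moreover have "m d0 d1 \<in> W" using U d0 d1 by auto
    ultimately show False using W by (auto simp: disjnt_def)
  qed
  show ?thesis using 1 2 by simp
qed

lemma fip_directed:
  assumes cs: "compact_space Y" and I: "I \<noteq> {}"
    and cl: "\<And>i. i \<in> I \<Longrightarrow> closedin Y (C i)" and ne: "\<And>i. i \<in> I \<Longrightarrow> C i \<noteq> {}"
    and dir: "\<And>i j. i \<in> I \<Longrightarrow> j \<in> I \<Longrightarrow> \<exists>k\<in>I. C k \<subseteq> C i \<inter> C j"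
  shows "\<exists>y. \<forall>i\<in>I. y \<in> C i"
proof -
  have fin: "\<exists>k\<in>I. C k \<subseteq> \<Inter>(C ` J)" if "finite J" "J \<noteq> {}" "J \<subseteq> I" for J
    using that
  proof (induction J rule: finite_ne_induct)
    case (singleton x) then show ?case by (intro bexI[of _ x]) auto
  next
    case (insert x F)
    have "F \<subseteq> I" using insert.prems by simp
    then obtain k where "k \<in> I" "C k \<subseteq> \<Inter>(C ` F)" using insert.IH by blast
    moreover have "x \<in> I" using insert.prems by simp
    ultimately obtain k' where "k' \<in> I" "C k' \<subseteq> C x \<inter> C k" using dir by blast
    then show ?case using \<open>C k \<subseteq> \<Inter>(C ` F)\<close> by (intro bexI[of _ k']) auto
  qed
  have "\<Inter>(C ` I) \<noteq> {}"
  proof (rule compact_space_fip[THEN iffD1, OF cs, rule_format], intro conjI allI impI)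
    show "\<forall>c\<in>C ` I. closedin Y c" using cl by auto
    fix F assume F: "finite F \<and> F \<subseteq> C ` I"
    then obtain J where J: "J \<subseteq> I" "finite J" "F = C ` J" by (meson finite_subset_image)
    show "\<Inter>F \<noteq> {}"
    proof (cases "J = {}")
      case True then show ?thesis using J by simp
    next
      case False
      then obtain k where "k \<in> I" "C k \<subseteq> \<Inter>(C ` J)" using fin J by blast
      then have "C k \<subseteq> \<Inter>F" using J by simp
      moreover have "C k \<noteq> {}" using ne \<open>k \<in> I\<close> by simp
      ultimately show ?thesis by blast
    qed
  qed
  then obtain y where "y \<in> \<Inter>(C ` I)" by blast
  then show ?thesis by blast
qed

lemma ts_assoc: "top_semigroup \<sigma> m \<Longrightarrow> x \<in> topspace \<sigma> \<Longrightarrow> y \<in> topspace \<sigma> \<Longrightarrow> z \<in> topspace \<sigma> \<Longrightarrow>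
   m (m x y) z = m x (m y z)"
  by (simp add: top_semigroup_def)

lemma ts_closed: "top_semigroup \<sigma> m \<Longrightarrow> x \<in> topspace \<sigma> \<Longrightarrow> y \<in> topspace \<sigma> \<Longrightarrow> m x y \<in> topspace \<sigma>"
  by (simp add: top_semigroup_def)

lemma ts_haus: "top_semigroup \<sigma> m \<Longrightarrow> Hausdorff_space \<sigma>"
  by (simp add: top_semigroup_def)

lemma ts_cont_left:
  assumes ts: "top_semigroup \<sigma> m" and t: "t \<in> topspace \<sigma>"
  shows "continuous_map \<sigma> \<sigma> (\<lambda>x. m t x)"
  using ts_cont2[OF ts, of \<sigma> "\<lambda>x. t" "\<lambda>x. x"] t continuous_map_id[unfolded id_def] by simp

lemma ts_cont_right:
  assumes ts: "top_semigroup \<sigma> m" and t: "t \<in> topspace \<sigma>"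
  shows "continuous_map \<sigma> \<sigma> (\<lambda>x. m x t)"
  using ts_cont2[OF ts, of \<sigma> "\<lambda>x. x" "\<lambda>x. t"] t continuous_map_id[unfolded id_def] by simp

lemma image_closed:
  assumes cs: "compact_space X" and H: "Hausdorff_space Y" and f: "continuous_map X Y f" and A: "closedin X A"
  shows "closedin Y (f ` A)"
  by (meson A H closedin_compact_space compactin_imp_closedin cs f image_compactin)

lemma idempotent_exists:
  assumes ts: "top_semigroup \<sigma> m" and cs: "compact_space \<sigma>" and L: "closedin \<sigma> L" "L \<noteq> {}"
    and sub: "\<forall>x\<in>L. \<forall>y\<in>L. m x y \<in> L"
  shows "\<exists>g\<in>L. m g g = g"
proof -
  define Fam where "Fam = {A. A \<subseteq> L \<and> closedin \<sigma> A \<and> A \<noteq> {} \<and> (\<forall>x\<in>A. \<forall>y\<in>A. m x y \<in> A)}"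
  define \<A> where "\<A> = (\<lambda>A. L - A) ` Fam"
  have LF: "L \<in> Fam" using L sub by (auto simp: Fam_def)
  have "\<exists>M\<in>\<A>. \<forall>X\<in>\<A>. M \<subseteq> X \<longrightarrow> X = M"
  proof (rule Zorn_Lemma2, rule ballI)
    fix C assume C: "C \<in> chains \<A>"
    show "\<exists>U\<in>\<A>. \<forall>X\<in>C. X \<subseteq> U"
    proof (cases "C = {}")
      case True then show ?thesis using LF by (auto simp: \<A>_def)
    next
      case False
      have CA: "C \<subseteq> \<A>" using C by (simp add: chains_def)
      have cF: "L - c \<in> Fam" if cC: "c \<in> C" for c
      proof -
        obtain A where "A \<in> Fam" "c = L - A" using CA cC by (auto simp: \<A>_def)
        moreover then have "L - c = A" by (auto simp: Fam_def)
        ultimately show ?thesis by simp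
      qed
      define B where "B = \<Inter>((\<lambda>c. L - c) ` C)"
      have BL: "B \<subseteq> L" using False by (auto simp: B_def)
      have Bc: "closedin \<sigma> B" unfolding B_def
        by (rule closedin_Inter) (use False cF in \<open>auto simp: Fam_def\<close>)
      have Bs: "\<forall>x\<in>B. \<forall>y\<in>B. m x y \<in> B" using cF by (auto simp: B_def Fam_def)
      have "\<exists>y. \<forall>c\<in>C. y \<in> L - c"
      proof (rule fip_directed[OF cs False])
        show "closedin \<sigma> (L - c)" "L - c \<noteq> {}" if "c \<in> C" for c using cF[OF that] by (auto simp: Fam_def)
        fix i j assume "i \<in> C" "j \<in> C"
        then have "i \<subseteq> j \<or> j \<subseteq> i" using C by (auto simp: chains_def chain_subset_def)
        then show "\<exists>k\<in>C. L - k \<subseteq> (L - i) \<inter> (L - j)" using \<open>i \<in> C\<close> \<open>j \<in> C\<close> by auto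
      qed
      then have "B \<noteq> {}" by (auto simp: B_def)
      then have "B \<in> Fam" using BL Bc Bs by (auto simp: Fam_def)
      moreover have "\<forall>X\<in>C. X \<subseteq> L - B"
      proof
        fix X assume "X \<in> C"
        then obtain A where "A \<in> Fam" "X = L - A" using CA by (auto simp: \<A>_def)
        then show "X \<subseteq> L - B" using \<open>X \<in> C\<close> by (auto simp: B_def)
      qed
      ultimately show ?thesis by (auto simp: \<A>_def)
    qed
  qed
  then obtain A0 where A0: "A0 \<in> Fam" and minA: "\<And>A. A \<in> Fam \<Longrightarrow> A \<subseteq> A0 \<Longrightarrow> A = A0"
  proof -
    assume r: "\<And>A0. A0 \<in> Fam \<Longrightarrow> (\<And>A. A \<in> Fam \<Longrightarrow> A \<subseteq> A0 \<Longrightarrow> A = A0) \<Longrightarrow> thesis"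
    obtain M where M: "M \<in> \<A>" "\<forall>X\<in>\<A>. M \<subseteq> X \<longrightarrow> X = M" using \<open>\<exists>M\<in>\<A>. _\<close> by blast
    then obtain A0 where A0: "A0 \<in> Fam" "M = L - A0" by (auto simp: \<A>_def)
    show thesis
    proof (rule r[OF A0(1)])
      fix A assume A: "A \<in> Fam" "A \<subseteq> A0"
      then have "L - A \<in> \<A>" "M \<subseteq> L - A" using A0 by (auto simp: \<A>_def)
      then have "L - A = L - A0" using M A0 by auto
      moreover have "A \<subseteq> L" "A0 \<subseteq> L" using A A0 by (auto simp: Fam_def)
      ultimately show "A = A0" by blast
    qed
  qed
  have A0L: "A0 \<subseteq> L" and A0c: "closedin \<sigma> A0" and A0ne: "A0 \<noteq> {}" and A0s: "\<forall>x\<in>A0. \<forall>y\<in>A0. m x y \<in> A0"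
    using A0 by (auto simp: Fam_def)
  have A0t: "A0 \<subseteq> topspace \<sigma>" using A0c closedin_subset by blast
  obtain t where t: "t \<in> A0" using A0ne by blast
  have tt: "t \<in> topspace \<sigma>" using t A0t by blast
  have ct: "continuous_map \<sigma> \<sigma> (\<lambda>x. m t x)" using ts_cont_left[OF ts tt] .
  have "(\<lambda>x. m t x) ` A0 \<in> Fam"
    unfolding Fam_def
  proof (intro CollectI conjI)
    show "(\<lambda>x. m t x) ` A0 \<subseteq> L" using A0s t A0L by auto
    show "closedin \<sigma> ((\<lambda>x. m t x) ` A0)" using image_closed[OF cs ts_haus[OF ts] ct A0c] .
    show "(\<lambda>x. m t x) ` A0 \<noteq> {}" using A0ne by simp
    show "\<forall>x\<in>(\<lambda>x. m t x) ` A0. \<forall>y\<in>(\<lambda>x. m t x) ` A0. m x y \<in> (\<lambda>x. m t x) ` A0"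
    proof (intro ballI)
      fix x y assume "x \<in> (\<lambda>x. m t x) ` A0" "y \<in> (\<lambda>x. m t x) ` A0"
      then obtain a b where ab: "a \<in> A0" "b \<in> A0" "x = m t a" "y = m t b" by auto
      have "m x y = m t (m a (m t b))"
        using ab t A0t A0s ts_assoc[OF ts] by (simp add: subset_iff)
      moreover have "m a (m t b) \<in> A0" using A0s ab t by blast
      ultimately show "m x y \<in> (\<lambda>x. m t x) ` A0" by blast
    qed
  qed
  moreover have "(\<lambda>x. m t x) ` A0 \<subseteq> A0" using A0s t by auto
  ultimately have eq: "(\<lambda>x. m t x) ` A0 = A0" using minA by blast
  define Z where "Z = {x \<in> A0. m t x = t}"
  have "Z \<in> Fam"
    unfolding Fam_def
  proof (intro CollectI conjI)
    show "Z \<subseteq> L" using A0L by (auto simp: Z_def)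
    have "Z = A0 \<inter> {x \<in> topspace \<sigma>. m t x \<in> {t}}" using A0t by (auto simp: Z_def)
    moreover have "closedin \<sigma> {x \<in> topspace \<sigma>. m t x \<in> {t}}"
      by (rule closedin_continuous_map_preimage[OF ct closedin_Hausdorff_singleton[OF ts_haus[OF ts] tt]])
    ultimately show "closedin \<sigma> Z" using A0c by auto
    show "Z \<noteq> {}" using eq t unfolding Z_def by (metis (mono_tags, lifting) empty_iff image_iff mem_Collect_eq)
    show "\<forall>x\<in>Z. \<forall>y\<in>Z. m x y \<in> Z"
    proof (intro ballI)
      fix x y assume "x \<in> Z" "y \<in> Z"
      then have "m t (m x y) = t" using ts_assoc[OF ts, of t x y] A0t tt by (auto simp: Z_def subset_iff)
      then show "m x y \<in> Z" using \<open>x \<in> Z\<close> \<open>y \<in> Z\<close> A0s by (auto simp: Z_def)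
    qed
  qed
  moreover have "Z \<subseteq> A0" by (auto simp: Z_def)
  ultimately have "Z = A0" using minA by blast
  then have "m t t = t" using t by (auto simp: Z_def)
  then show ?thesis using t A0L by blast
qed

lemma bicyclic:
  assumes ts: "top_semigroup \<sigma> m" and cs: "compact_space \<sigma>"
    and et: "e \<in> topspace \<sigma>" and at: "a \<in> topspace \<sigma>" and bt: "b \<in> topspace \<sigma>"
    and ee: "m e e = e" and ea: "m e a = a" and ae: "m a e = a" and eb: "m e b = b" and be: "m b e = b"
    and ab: "m a b = e"
  shows "m b a = e"
proof -
  have H: "Hausdorff_space \<sigma>" using ts_haus[OF ts] .
  note asc = ts_assoc[OF ts] and cl = ts_closed[OF ts]
  define pa where "pa n = ((\<lambda>y. m a y) ^^ n) a" for n
  define pb where "pb n = ((\<lambda>y. m y b) ^^ n) b" for n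
  have pa0: "pa 0 = a" and paS: "\<And>n. pa (Suc n) = m a (pa n)" by (simp_all add: pa_def)
  have pb0: "pb 0 = b" and pbS: "\<And>n. pb (Suc n) = m (pb n) b" by (simp_all add: pb_def)
  have pat: "pa n \<in> topspace \<sigma>" for n by (induction n) (simp_all add: pa0 paS at cl)
  have pbt: "pb n \<in> topspace \<sigma>" for n by (induction n) (simp_all add: pb0 pbS bt cl)
  have pbS': "pb (Suc n) = m b (pb n)" for n
  proof (induction n)
    case 0 then show ?case by (simp add: pbS pb0)
  next
    case (Suc n)
    have "pb (Suc (Suc n)) = m (m b (pb n)) b" using Suc by (simp add: pbS)
    also have "\<dots> = m b (m (pb n) b)" using asc bt pbt by simp
    finally show ?case by (simp add: pbS)
  qed
  have epb: "m e (pb n) = pb n" for n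
  proof (induction n)
    case 0 then show ?case by (simp add: pb0 eb)
  next
    case (Suc n) then show ?case using asc[OF et pbt bt, of n] by (simp add: pbS)
  qed
  have papb: "m (pa n) (pb n) = e" for n
  proof (induction n)
    case 0 then show ?case by (simp add: pa0 pb0 ab)
  next
    case (Suc n)
    have "m (pa (Suc n)) (pb (Suc n)) = m a (m (m (pa n) (pb n)) b)"
      using asc at bt pat pbt cl by (simp add: paS pbS)
    also have "\<dots> = e" using Suc by (simp add: asc[OF at et bt, symmetric] ae ab)
    finally show ?case .
  qed
  have pbpb: "m (pb n) (pb k) = pb (Suc (n + k))" for n k
  proof (induction k)
    case 0 then show ?case by (simp add: pb0 pbS)
  next
    case (Suc k)
    have "m (pb n) (pb (Suc k)) = m (m (pb n) (pb k)) b" using asc pbt bt by (simp add: pbS)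
    then show ?case using Suc by (simp add: pbS)
  qed
  define Bs where "Bs N = pb ` {N..}" for N
  define Cl where "Cl N = \<sigma> closure_of (Bs N)" for N
  have Bst: "Bs N \<subseteq> topspace \<sigma>" for N using pbt by (auto simp: Bs_def)
  have ClN: "Cl N \<noteq> {}" for N
    using closure_of_subset[OF Bst[of N]] by (auto simp: Cl_def Bs_def)
  have Clmono: "M \<le> N \<Longrightarrow> Cl N \<subseteq> Cl M" for M N
    unfolding Cl_def by (rule closure_of_mono) (auto simp: Bs_def)
  define L where "L = (\<Inter>N. Cl N)"
  have Lne: "L \<noteq> {}"
  proof -
    have "\<exists>y. \<forall>i\<in>UNIV. y \<in> Cl i"
    proof (rule fip_directed[OF cs])
      fix i j :: nat
      show "\<exists>k\<in>UNIV. Cl k \<subseteq> Cl i \<inter> Cl j" using Clmono[of i "max i j"] Clmono[of j "max i j"] by auto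
    qed (use ClN in \<open>auto simp: Cl_def\<close>)
    then show ?thesis by (auto simp: L_def)
  qed
  have Lc: "closedin \<sigma> L" unfolding L_def by (rule closedin_Inter) (auto simp: Cl_def)
  have mult_cont: "continuous_map (prod_topology \<sigma> \<sigma>) \<sigma> (\<lambda>(x,y). m x y)" using ts by (simp add: top_semigroup_def)
  have ClCl: "m x y \<in> Cl N" if "x \<in> Cl N" "y \<in> Cl N" for x y N
  proof -
    have "(x,y) \<in> prod_topology \<sigma> \<sigma> closure_of (Bs N \<times> Bs N)" using that by (simp add: closure_of_Times Cl_def)
    then have "(\<lambda>(x,y). m x y) (x,y) \<in> \<sigma> closure_of ((\<lambda>(x,y). m x y) ` (Bs N \<times> Bs N))"
      using continuous_map_image_closure_subset[OF mult_cont] by blast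
    moreover have "(\<lambda>(x,y). m x y) ` (Bs N \<times> Bs N) \<subseteq> Bs N" by (auto simp: Bs_def pbpb)
    ultimately show ?thesis unfolding Cl_def using closure_of_mono by fastforce
  qed
  have Ls: "\<forall>x\<in>L. \<forall>y\<in>L. m x y \<in> L" using ClCl by (auto simp: L_def)
  obtain g where gL: "g \<in> L" and gg: "m g g = g" using idempotent_exists[OF ts cs Lc Lne Ls] by blast
  have gt: "g \<in> topspace \<sigma>" using gL Lc closedin_subset by blast
  define Pr where "Pr N = prod_topology \<sigma> \<sigma> closure_of ((\<lambda>n. (pa n, pb n)) ` {N..})" for N
  have csp: "compact_space (prod_topology \<sigma> \<sigma>)" using cs by (simp add: compact_space_prod_topology)
  have Hp: "Hausdorff_space (prod_topology \<sigma> \<sigma>)" using H by (simp add: Hausdorff_space_prod_topology)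
  have "\<exists>q. \<forall>N\<in>UNIV. q \<in> Pr N \<inter> {q \<in> topspace (prod_topology \<sigma> \<sigma>). snd q \<in> {g}}"
  proof (rule fip_directed[OF csp])
    fix N :: nat
    show "closedin (prod_topology \<sigma> \<sigma>) (Pr N \<inter> {q \<in> topspace (prod_topology \<sigma> \<sigma>). snd q \<in> {g}})"
      using closedin_continuous_map_preimage[OF continuous_map_snd[of \<sigma> \<sigma>] closedin_Hausdorff_singleton[OF H gt]]
      by (intro closedin_Int) (auto simp: Pr_def)
    have "closedin \<sigma> (snd ` Pr N)"
      by (rule image_closed[OF csp H continuous_map_snd]) (simp add: Pr_def)
    moreover have "Bs N \<subseteq> snd ` Pr N"
    proof
      fix x assume "x \<in> Bs N"
      then obtain n where "n \<ge> N" "x = pb n" by (auto simp: Bs_def)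
      moreover have "(pa n, pb n) \<in> Pr N" unfolding Pr_def
        using \<open>n \<ge> N\<close> by (intro closure_of_subset[THEN subsetD]) (auto simp: pat pbt)
      ultimately show "x \<in> snd ` Pr N" by force
    qed
    ultimately have "Cl N \<subseteq> snd ` Pr N" unfolding Cl_def by (intro closure_of_minimal)
    moreover have "g \<in> Cl N" using gL by (auto simp: L_def)
    ultimately obtain q where "q \<in> Pr N" "snd q = g" by (metis image_iff subsetD)
    moreover have "q \<in> topspace (prod_topology \<sigma> \<sigma>)" using \<open>q \<in> Pr N\<close> unfolding Pr_def in_closure_of by blast
    ultimately show "Pr N \<inter> {q \<in> topspace (prod_topology \<sigma> \<sigma>). snd q \<in> {g}} \<noteq> {}" by blast
  next
    fix i j :: nat
    have "Pr N \<subseteq> Pr M" if "M \<le> N" for M N unfolding Pr_def by (rule closure_of_mono) (use that in auto)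
    then have "Pr (max i j) \<subseteq> Pr i" "Pr (max i j) \<subseteq> Pr j" by auto
    then show "\<exists>k\<in>UNIV. Pr k \<inter> {q \<in> topspace (prod_topology \<sigma> \<sigma>). snd q \<in> {g}} \<subseteq>
        (Pr i \<inter> {q \<in> topspace (prod_topology \<sigma> \<sigma>). snd q \<in> {g}}) \<inter> (Pr j \<inter> {q \<in> topspace (prod_topology \<sigma> \<sigma>). snd q \<in> {g}})"
      by (intro bexI[of _ "max i j"]) auto
  qed simp
  then obtain q where "q \<in> Pr 0 \<inter> {q \<in> topspace (prod_topology \<sigma> \<sigma>). snd q \<in> {g}}" by blast
  then have q0: "q \<in> Pr 0" and qg: "snd q = g" and qt: "q \<in> topspace (prod_topology \<sigma> \<sigma>)" by auto
  define h where "h = fst q"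
  have ht: "h \<in> topspace \<sigma>" using qt by (auto simp: h_def)
  have "(\<lambda>(x,y). m x y) q \<in> \<sigma> closure_of ((\<lambda>(x,y). m x y) ` ((\<lambda>n. (pa n, pb n)) ` {0..}))"
    using continuous_map_image_closure_subset[OF mult_cont] q0 unfolding Pr_def by blast
  moreover have "(\<lambda>(x,y). m x y) ` ((\<lambda>n. (pa n, pb n)) ` {0..}) = {e}" using papb by (auto simp: image_image)
  ultimately have hg: "m h g = e" using closure_of_singleton[OF Hausdorff_imp_t1_space[OF H]] et
    by (cases q) (auto simp: h_def qg[symmetric])
  have eSe: "m e x = x" if "x \<in> Cl 0" for x
    by (rule forall_in_closure_of_eq[OF that[unfolded Cl_def] H ts_cont_left[OF ts et] continuous_map_id[unfolded id_def]])
       (auto simp: Bs_def epb)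
  have g0: "g \<in> Cl 0" using gL by (auto simp: L_def)
  have "g = m e g" using eSe[OF g0] by simp
  also have "\<dots> = m h (m g g)" using asc[OF ht gt gt] hg by simp
  also have "\<dots> = e" using gg hg by simp
  finally have ge: "g = e" .
  have e1: "e \<in> Cl 1" using gL ge by (auto simp: L_def)
  have "closedin \<sigma> ((\<lambda>x. m b x) ` Cl 0)"
    by (rule image_closed[OF cs H ts_cont_left[OF ts bt]]) (simp add: Cl_def)
  moreover have "Bs 1 \<subseteq> (\<lambda>x. m b x) ` Cl 0"
  proof
    fix x assume "x \<in> Bs 1"
    then obtain n where "n \<ge> 1" "x = pb n" by (auto simp: Bs_def)
    then have "x = m b (pb (n - 1))" using pbS'[of "n - 1"] by simp
    moreover have "pb (n - 1) \<in> Cl 0" unfolding Cl_def Bs_def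
      by (intro closure_of_subset[THEN subsetD]) (auto simp: pbt)
    ultimately show "x \<in> (\<lambda>x. m b x) ` Cl 0" by blast
  qed
  ultimately have "Cl 1 \<subseteq> (\<lambda>x. m b x) ` Cl 0" unfolding Cl_def using closure_of_minimal by blast
  then obtain k where k0: "k \<in> Cl 0" and bk: "m b k = e" using e1 by force
  have kt: "k \<in> topspace \<sigma>" using k0 unfolding Cl_def in_closure_of by blast
  have "a = m a (m b k)" using ae bk by simp
  also have "\<dots> = m e k" using asc[OF at bt kt] ab by simp
  also have "\<dots> = k" using eSe[OF k0] .
  finally show ?thesis using bk by simp
qed

lemma split_escape:
  assumes s: "s \<in> \<sigma> closure_of (h ` A)" and no: "\<And>i. s \<notin> \<sigma> closure_of (h ` {x\<in>A. f x = i})"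
  shows "finite \<Phi> \<Longrightarrow> s \<in> \<sigma> closure_of (h ` {x\<in>A. f x \<notin> \<Phi>})"
proof (induction \<Phi> rule: finite_induct)
  case empty then show ?case using s by simp
next
  case (insert i \<Phi>)
  have "h ` {x\<in>A. f x \<notin> \<Phi>} \<subseteq> h ` {x\<in>A. f x \<notin> insert i \<Phi>} \<union> h ` {x\<in>A. f x = i}" by auto
  then have "\<sigma> closure_of (h ` {x\<in>A. f x \<notin> \<Phi>}) \<subseteq> \<sigma> closure_of (h ` {x\<in>A. f x \<notin> insert i \<Phi>} \<union> h ` {x\<in>A. f x = i})"
    by (rule closure_of_mono)
  then have "\<sigma> closure_of (h ` {x\<in>A. f x \<notin> \<Phi>}) \<subseteq> \<sigma> closure_of (h ` {x\<in>A. f x \<notin> insert i \<Phi>}) \<union> \<sigma> closure_of (h ` {x\<in>A. f x = i})"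
    by (simp only: closure_of_Un)
  then show ?case using insert.IH no[of i] by blast
qed

lemma key_escape:
  fixes h :: "'a \<Rightarrow> 'b" and mul :: "'a \<Rightarrow> 'a \<Rightarrow> 'a" and idx :: "'a \<Rightarrow> 'i"
  assumes ts: "top_semigroup \<sigma> m" and cs: "compact_space \<sigma>"
    and hX: "h ` X \<subseteq> topspace \<sigma>" and inj: "inj_on h X"
    and mulX: "\<forall>x\<in>X. \<forall>y\<in>X. mul x y \<in> X"
    and hom: "\<forall>x\<in>X. \<forall>y\<in>X. h (mul x y) = m (h x) (h y)"
    and zX: "z0 \<in> X"
    and zero: "\<And>t. t \<in> \<sigma> closure_of (h ` X) \<Longrightarrow> m t (h z0) = h z0 \<and> m (h z0) t = h z0"
    and A: "A \<subseteq> X"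
    and fac: "\<And>x. x \<in> A \<Longrightarrow> ga x \<in> X \<and> \<iota> (idx x) \<in> X \<and> gb x \<in> X"
    and fac4: "\<And>x. x \<in> A \<Longrightarrow> mul (mul (ga x) (\<iota> (idx x))) (gb x) = x"
    and idem: "\<And>x. x \<in> A \<Longrightarrow> mul (\<iota> (idx x)) (\<iota> (idx x)) = \<iota> (idx x)"
    and orth: "\<And>x y. x \<in> A \<Longrightarrow> y \<in> A \<Longrightarrow> idx x \<noteq> idx y \<Longrightarrow> mul (\<iota> (idx x)) (\<iota> (idx y)) = z0"
    and inji: "inj_on \<iota> (idx ` A)"
    and esc: "\<And>\<Phi>. finite \<Phi> \<Longrightarrow> s \<in> \<sigma> closure_of (h ` {x \<in> A. idx x \<notin> \<Phi>})"
  shows "s = h z0"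
proof -
  have H: "Hausdorff_space \<sigma>" using ts_haus[OF ts] .
  define Y where "Y = prod_topology \<sigma> (prod_topology \<sigma> \<sigma>)"
  have csY: "compact_space Y" using cs by (simp add: Y_def compact_space_prod_topology)
  define \<phi> where "\<phi> y = m (m (fst y) (fst (snd y))) (snd (snd y))" for y
  have c1: "continuous_map Y \<sigma> fst" unfolding Y_def by (rule continuous_map_fst)
  have c2: "continuous_map Y \<sigma> (fst \<circ> snd)" unfolding Y_def
    by (rule continuous_map_compose[OF continuous_map_snd continuous_map_fst])
  have c3: "continuous_map Y \<sigma> (snd \<circ> snd)" unfolding Y_def
    by (rule continuous_map_compose[OF continuous_map_snd continuous_map_snd])
  have c2': "continuous_map Y \<sigma> (\<lambda>y. fst (snd y))" using c2 by (simp add: o_def)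
  have c3': "continuous_map Y \<sigma> (\<lambda>y. snd (snd y))" using c3 by (simp add: o_def)
  have cphi: "continuous_map Y \<sigma> \<phi>" unfolding \<phi>_def
    by (intro ts_cont2[OF ts] c1 c2' c3')
  define trip where "trip x = (h (ga x), h (\<iota> (idx x)), h (gb x))" for x
  define AF where "AF \<Phi> = {x \<in> A. idx x \<notin> \<Phi>}" for \<Phi>
  define K where "K \<Phi> = Y closure_of (trip ` AF \<Phi>)" for \<Phi>
  define C where "C \<Phi> = K \<Phi> \<inter> {y \<in> topspace Y. \<phi> y \<in> {s}}" for \<Phi>
  have st: "s \<in> topspace \<sigma>" using esc[of "{}"] by (simp add: in_closure_of)
  have phitrip: "\<phi> (trip x) = h x" if "x \<in> A" for x
  proof -
    have f: "ga x \<in> X" "\<iota> (idx x) \<in> X" "gb x \<in> X" using fac[OF that] by auto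
    have "h (mul (mul (ga x) (\<iota> (idx x))) (gb x)) = m (h (mul (ga x) (\<iota> (idx x)))) (h (gb x))"
      using hom mulX f(1-3) by simp
    also have "\<dots> = m (m (h (ga x)) (h (\<iota> (idx x)))) (h (gb x))" using hom f(1-3) by simp
    finally show ?thesis using fac4[OF that] by (simp add: \<phi>_def trip_def)
  qed
  have tripY: "trip x \<in> topspace Y" if "x \<in> A" for x
    using fac[OF that] hX by (auto simp: trip_def Y_def)
  have "\<exists>y. \<forall>\<Phi>\<in>{\<Phi>. finite \<Phi>}. y \<in> C \<Phi>"
  proof (rule fip_directed[OF csY])
    show "{\<Phi>. finite \<Phi>} \<noteq> {}" by auto
    fix \<Phi> assume "\<Phi> \<in> {\<Phi>. finite (\<Phi> :: 'i set)}"
    then have fin: "finite \<Phi>" by simp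
    show "closedin Y (C \<Phi>)" unfolding C_def K_def
      by (rule closedin_Int[OF closedin_closure_of closedin_continuous_map_preimage[OF cphi closedin_Hausdorff_singleton[OF H st]]])
    have "closedin \<sigma> (\<phi> ` K \<Phi>)" by (rule image_closed[OF csY H cphi]) (simp add: K_def)
    moreover have "h ` AF \<Phi> \<subseteq> \<phi> ` K \<Phi>"
    proof
      fix w assume "w \<in> h ` AF \<Phi>"
      then obtain x where x: "x \<in> AF \<Phi>" "w = h x" by auto
      then have "trip x \<in> K \<Phi>" unfolding K_def
        by (intro closure_of_subset[THEN subsetD]) (auto simp: AF_def tripY)
      then show "w \<in> \<phi> ` K \<Phi>" using x phitrip by (force simp: AF_def)
    qed
    ultimately have "\<sigma> closure_of (h ` AF \<Phi>) \<subseteq> \<phi> ` K \<Phi>" by (intro closure_of_minimal)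
    then have "s \<in> \<phi> ` K \<Phi>" using esc[OF fin] by (auto simp: AF_def)
    then obtain y where "y \<in> K \<Phi>" "\<phi> y = s" by auto
    moreover have "y \<in> topspace Y" using \<open>y \<in> K \<Phi>\<close> unfolding K_def in_closure_of by blast
    ultimately show "C \<Phi> \<noteq> {}" by (auto simp: C_def)
  next
    fix \<Phi> \<Psi> assume "\<Phi> \<in> {\<Phi>. finite (\<Phi> :: 'i set)}" "\<Psi> \<in> {\<Phi>. finite (\<Phi> :: 'i set)}"
    then have "\<Phi> \<union> \<Psi> \<in> {\<Phi>. finite \<Phi>}" by simp
    moreover have "K (\<Phi> \<union> \<Psi>) \<subseteq> K \<Phi>" "K (\<Phi> \<union> \<Psi>) \<subseteq> K \<Psi>" unfolding K_def AF_def
      by (auto intro!: closure_of_mono)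
    ultimately show "\<exists>k\<in>{\<Phi>. finite \<Phi>}. C k \<subseteq> C \<Phi> \<inter> C \<Psi>"
      by (intro bexI[of _ "\<Phi> \<union> \<Psi>"]) (auto simp: C_def)
  qed
  then obtain y where y: "\<And>\<Phi>. finite \<Phi> \<Longrightarrow> y \<in> C \<Phi>" by auto
  have yK: "\<And>\<Phi>. finite \<Phi> \<Longrightarrow> y \<in> K \<Phi>" and phiy: "\<phi> y = s" using y[of "{}"] y by (auto simp: C_def)
  define D where "D = h ` \<iota> ` idx ` A"
  have pD: "fst (snd y) \<in> \<sigma> closure_of (h ` \<iota> ` idx ` AF \<Phi>)" if "finite \<Phi>" for \<Phi>
  proof -
    have "(fst \<circ> snd) y \<in> \<sigma> closure_of ((fst \<circ> snd) ` trip ` AF \<Phi>)"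
      using continuous_map_image_closure_subset[OF c2] yK[OF that] unfolding K_def by blast
    moreover have "(fst \<circ> snd) ` trip ` AF \<Phi> = h ` \<iota> ` idx ` AF \<Phi>" by (force simp: trip_def)
    ultimately show ?thesis by simp
  qed
  have Dt: "D \<subseteq> topspace \<sigma>" using fac hX by (force simp: D_def)
  have zt: "h z0 \<in> topspace \<sigma>" using zX hX by auto
  have p0: "fst (snd y) = h z0"
  proof (rule orth_limit[OF ts Dt zt])
    show "\<forall>d\<in>D. m d d = d"
    proof
      fix d assume "d \<in> D"
      then obtain x where x: "x \<in> A" "d = h (\<iota> (idx x))" by (auto simp: D_def)
      have "m d d = h (mul (\<iota> (idx x)) (\<iota> (idx x)))" using hom fac[OF x(1)] x(2) by simp
      then show "m d d = d" using idem[OF x(1)] x(2) by simp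
    qed
    show "\<forall>d\<in>D. \<forall>d'\<in>D. d \<noteq> d' \<longrightarrow> m d d' = h z0"
    proof (intro ballI impI)
      fix d d' assume "d \<in> D" "d' \<in> D" "d \<noteq> d'"
      then obtain x x' where x: "x \<in> A" "x' \<in> A" "d = h (\<iota> (idx x))" "d' = h (\<iota> (idx x'))" by (auto simp: D_def)
      then have ne: "idx x \<noteq> idx x'" using \<open>d \<noteq> d'\<close> by auto
      have "m d d' = h (mul (\<iota> (idx x)) (\<iota> (idx x')))" using hom fac[OF x(1)] fac[OF x(2)] x(3,4) by simp
      then show "m d d' = h z0" using orth[OF x(1,2) ne] by simp
    qed
    fix d
    define \<Phi> where "\<Phi> = {i \<in> idx ` A. h (\<iota> i) = d}"
    have "finite \<Phi>"
    proof (cases "\<Phi> = {}")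
      case False
      then obtain i0 where i0: "i0 \<in> \<Phi>" by auto
      have "\<Phi> \<subseteq> {i0}"
      proof
        fix i assume i: "i \<in> \<Phi>"
        then have "h (\<iota> i) = h (\<iota> i0)" "\<iota> i \<in> X" "\<iota> i0 \<in> X" using i0 fac by (auto simp: \<Phi>_def)
        then have "\<iota> i = \<iota> i0" using inj by (auto dest: inj_onD)
        then show "i \<in> {i0}" using inji i i0 by (auto simp: \<Phi>_def dest: inj_onD)
      qed
      then show ?thesis using finite_subset by blast
    qed simp
    moreover have "h ` \<iota> ` idx ` AF \<Phi> \<subseteq> D - {d}" by (auto simp: D_def AF_def \<Phi>_def)
    ultimately show "fst (snd y) \<in> \<sigma> closure_of (D - {d})" using pD closure_of_mono by blast
  qed
  have clX: "\<sigma> closure_of (h ` A) \<subseteq> \<sigma> closure_of (h ` X)" using A by (intro closure_of_mono) auto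
  have ay: "fst y \<in> \<sigma> closure_of (h ` X)"
  proof -
    have "fst y \<in> \<sigma> closure_of (fst ` trip ` AF {})"
      using continuous_map_image_closure_subset[OF c1] yK[of "{}"] unfolding K_def by blast
    moreover have "fst ` trip ` AF {} \<subseteq> h ` X" using fac by (auto simp: trip_def AF_def)
    ultimately show ?thesis using closure_of_mono by blast
  qed
  have by': "snd (snd y) \<in> \<sigma> closure_of (h ` X)"
  proof -
    have "(snd \<circ> snd) y \<in> \<sigma> closure_of ((snd \<circ> snd) ` trip ` AF {})"
      using continuous_map_image_closure_subset[OF c3] yK[of "{}"] unfolding K_def by blast
    moreover have "(snd \<circ> snd) ` trip ` AF {} \<subseteq> h ` X" using fac by (auto simp: trip_def AF_def)
    ultimately show ?thesis using closure_of_mono by fastforce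
  qed
  have "s = m (m (fst y) (h z0)) (snd (snd y))" using phiy p0 by (simp add: \<phi>_def)
  also have "\<dots> = h z0" using zero[OF ay] zero[OF by'] by simp
  finally show ?thesis .
qed

definition lp :: "('v,'e) gis \<Rightarrow> ('v,'e) path" where
  "lp x = (case x of GElem u v \<Rightarrow> u | GZero \<Rightarrow> undefined)"
definition rp :: "('v,'e) gis \<Rightarrow> ('v,'e) path" where
  "rp x = (case x of GElem u v \<Rightarrow> v | GZero \<Rightarrow> undefined)"
definition vtx :: "'v \<Rightarrow> ('v,'e) gis" where
  "vtx w = GElem (w,[]) (w,[])"

lemma lp_simp[simp]: "lp (GElem u v) = u" and rp_simp[simp]: "rp (GElem u v) = v"
  by (simp_all add: lp_def rp_def)

lemma carrier_elem:
  assumes "x \<in> gis_carrier V Ed s r" "x \<noteq> GZero"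
  shows "x = GElem (lp x) (rp x)" "is_path V Ed s r (lp x)" "is_path V Ed s r (rp x)"
    "path_range r (lp x) = path_range r (rp x)"
  using assms by (auto simp: gis_carrier_def)

lemma carrier_GElem_iff[simp]:
  "GElem u v \<in> gis_carrier V Ed s r \<longleftrightarrow> is_path V Ed s r u \<and> is_path V Ed s r v \<and> path_range r u = path_range r v"
  unfolding gis_carrier_def by blast

lemma path_range_in_V:
  assumes "r ` Ed \<subseteq> V" "is_path V Ed s r p" shows "path_range r p \<in> V"
proof (cases "snd p = []")
  case False
  then have "last (snd p) \<in> Ed" using assms(2) last_in_set by (auto simp: is_path_def)
  then show ?thesis using False assms(1) by (auto simp: path_range_def)
qed (use assms in \<open>auto simp: path_range_def is_path_def\<close>)

lemma vtx_in: "w \<in> V \<Longrightarrow> vtx w \<in> gis_carrier V Ed s r"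
  by (auto simp: vtx_def gis_carrier_def is_path_def path_range_def)

lemma mult_zero_right[simp]: "gis_mult x GZero = GZero"
  by (cases x) simp_all

lemma mult_zero_left[simp]: "gis_mult GZero x = GZero"
  by simp

lemma vtx_idem: "gis_mult (vtx w) (vtx w) = vtx w"
  by (simp add: vtx_def)

lemma vtx_orth: "w \<noteq> w' \<Longrightarrow> gis_mult (vtx w) (vtx w') = GZero"
  by (simp add: vtx_def)

lemma fac_vertex:
  assumes "path_range r u = w"
  shows "gis_mult (gis_mult (GElem u (w,[])) (vtx w)) (GElem (w,[]) v) = GElem u v"
  by (simp add: vtx_def)

lemma self_idem: "gis_mult (GElem u u) (GElem u u) = GElem u u"
  by simp

lemma fac_left: "gis_mult (gis_mult (GElem u u) (GElem u u)) (GElem u v) = GElem u v"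
  by simp

lemma fac_right: "gis_mult (gis_mult (GElem u v) (GElem v v)) (GElem v v) = GElem u v"
  by simp

lemma orth_paths:
  assumes g: "r ` Ed \<subseteq> V"
    and acyc: "\<And>w c. is_path V Ed s r (w, c) \<Longrightarrow> c \<noteq> [] \<Longrightarrow> path_range r (w, c) = w \<Longrightarrow> False"
    and pu: "is_path V Ed s r u" and pu': "is_path V Ed s r u'"
    and rr: "path_range r u = path_range r u'" and ne: "u \<noteq> u'"
  shows "gis_mult (GElem u u) (GElem u' u') = GZero"
proof -
  have noext: False if p1: "is_path V Ed s r a" "is_path V Ed s r b" "path_range r a = path_range r b"
    "a \<noteq> b" "fst b = fst a" "snd b = snd a @ t" for a b t
  proof -
    have "t \<noteq> []" using that by (auto simp: prod_eq_iff)
    have bb: "b = (fst a, snd a @ t)" using that by (simp add: prod_eq_iff)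
    have "is_path V Ed s r (path_range r (fst a, snd a), t)"
      using is_path_split(2)[OF g, of s "fst a" "snd a" t] p1(2) bb by simp
    moreover have "path_range r (path_range r (fst a, snd a), t) = path_range r (fst a, snd a)"
      using p1(3) bb path_range_append2[of r "fst a" "snd a" t] by simp
    ultimately show False using acyc \<open>t \<noteq> []\<close> by blast
  qed
  show ?thesis
  proof (cases "fst u' = fst u \<and> (\<exists>t. snd u' = snd u @ t)")
    case True then show ?thesis using noext[OF pu pu' rr ne] by auto
  next
    case False
    moreover have "\<not> (fst u = fst u' \<and> (\<exists>t. snd u = snd u' @ t))"
      using noext[OF pu' pu rr[symmetric] ne[symmetric]] by auto
    ultimately show ?thesis by simp
  qed
qed

theorem corollary5p1:
  fixes V :: "'v set" and Ed :: "'e set" and s r :: "'e \<Rightarrow> 'v"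
    and \<tau> :: "('v,'e) gis topology"
  assumes graph: "s ` Ed \<subseteq> V" "r ` Ed \<subseteq> V"
    and carrier: "topspace \<tau> = gis_carrier V Ed s r"
    and hausdorff: "Hausdorff_space \<tau>"
    and cont: "continuous_map (prod_topology \<tau> \<tau>) \<tau> (\<lambda>(x,y). gis_mult x y)"
  shows "((\<exists>(\<sigma> :: 'b topology) m h. embeds_in_compact_top_semigroup \<tau> gis_mult \<sigma> m h)
            \<longrightarrow> compact_space \<tau>)
       \<and> (compact_space \<tau> \<longrightarrow>
            (\<exists>(\<sigma> :: ('v,'e) gis topology) m h. embeds_in_compact_top_semigroup \<tau> gis_mult \<sigma> m h))"
proof (intro conjI impI)
  assume c\<tau>: "compact_space \<tau>"
  have em: "embedding_map \<tau> \<tau> id" by (simp add: embedding_map_def)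
  have "embeds_in_compact_top_semigroup \<tau> gis_mult \<tau> gis_mult id"
    unfolding embeds_in_compact_top_semigroup_def top_semigroup_def
    using hausdorff cont c\<tau> gis_mult_closed[OF graph(2)] carrier gis_assoc em by auto
  then show "\<exists>(\<sigma> :: ('v,'e) gis topology) m h. embeds_in_compact_top_semigroup \<tau> gis_mult \<sigma> m h" by blast
next
  assume "\<exists>(\<sigma> :: 'b topology) m h. embeds_in_compact_top_semigroup \<tau> gis_mult \<sigma> m h"
  then obtain \<sigma> :: "'b topology" and m h where E: "embeds_in_compact_top_semigroup \<tau> gis_mult \<sigma> m h" by blast
  have ts: "top_semigroup \<sigma> m" and cs: "compact_space \<sigma>" and emb: "embedding_map \<tau> \<sigma> h"
    and hom0: "\<forall>x\<in>topspace \<tau>. \<forall>y\<in>topspace \<tau>. h (gis_mult x y) = m (h x) (h y)"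
    using E by (auto simp: embeds_in_compact_top_semigroup_def)
  define X where "X = topspace \<tau>"
  have XG: "X = gis_carrier V Ed s r" using carrier by (simp add: X_def)
  have hm: "homeomorphic_map \<tau> (subtopology \<sigma> (h ` X)) h" using emb by (simp add: embedding_map_def X_def)
  have inj: "inj_on h X" using homeomorphic_imp_injective_map[OF hm] unfolding X_def .
  have "h ` topspace \<tau> = topspace (subtopology \<sigma> (h ` X))" using homeomorphic_imp_surjective_map[OF hm] .
  then have hX: "h ` X \<subseteq> topspace \<sigma>" unfolding X_def[symmetric] topspace_subtopology by blast
  have hom: "\<forall>x\<in>X. \<forall>y\<in>X. h (gis_mult x y) = m (h x) (h y)" using hom0 unfolding X_def .
  have mulX: "\<forall>x\<in>X. \<forall>y\<in>X. gis_mult x y \<in> X" using gis_mult_closed[OF graph(2)] XG by blast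
  have H: "Hausdorff_space \<sigma>" using ts_haus[OF ts] .
  have zX: "GZero \<in> X" by (simp add: XG gis_carrier_def)
  have zt: "h GZero \<in> topspace \<sigma>" using zX hX by auto
  have zero: "m t (h GZero) = h GZero \<and> m (h GZero) t = h GZero" if t: "t \<in> \<sigma> closure_of (h ` X)" for t
  proof
    show "m t (h GZero) = h GZero"
      by (rule forall_in_closure_of_eq[OF t H ts_cont_right[OF ts zt]]) (use zt in auto, metis hom zX mult_zero_right)
    show "m (h GZero) t = h GZero"
      by (rule forall_in_closure_of_eq[OF t H ts_cont_left[OF ts zt]]) (use zt in auto, metis hom zX mult_zero_left)
  qed
  have acyc: False if pc: "is_path V Ed s r (w, c)" and cne: "c \<noteq> []" and cr: "path_range r (w, c) = w" for w c
  proof -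
    have wV: "w \<in> V" using pc by (simp add: is_path_def)
    have pw: "is_path V Ed s r (w, [])" using wV by (simp add: is_path_def)
    have rw: "path_range r (w, []) = w" by (simp add: path_range_def)
    define ee :: "('v,'e) gis" where "ee = vtx w"
    define aa where "aa = GElem (w, []) (w, c)"
    define bb where "bb = GElem (w, c) (w, [])"
    have inX: "ee \<in> X" "aa \<in> X" "bb \<in> X"
      using pw pc rw cr wV vtx_in[of w V Ed s r] by (auto simp: XG ee_def aa_def bb_def gis_carrier_def)
    have p1: "gis_mult ee ee = ee" "gis_mult ee aa = aa" "gis_mult aa ee = aa" "gis_mult ee bb = bb"
      "gis_mult bb ee = bb" "gis_mult aa bb = ee" using cne by (auto simp: ee_def aa_def bb_def vtx_def)
    have p2: "gis_mult bb aa = GElem (w, c) (w, c)" by (simp add: aa_def bb_def)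
    have hp: "\<And>x y. x \<in> X \<Longrightarrow> y \<in> X \<Longrightarrow> m (h x) (h y) = h (gis_mult x y)" using hom by simp
    have "m (h bb) (h aa) = h ee"
      by (rule bicyclic[OF ts cs, of "h ee" "h aa" "h bb"]) (use inX hX p1 hp in auto)
    then have "h (GElem (w, c) (w, c)) = h ee" using hp inX p2 by simp
    moreover have "GElem (w, c) (w, c) \<in> X" using mulX inX p2 by metis
    ultimately have "GElem (w, c) (w, c) = ee" using inj inX by (auto dest: inj_onD)
    then show False using cne by (simp add: ee_def vtx_def)
  qed
  have clo: "\<sigma> closure_of (h ` X) \<subseteq> h ` X"
  proof
    fix p assume p: "p \<in> \<sigma> closure_of (h ` X)"
    show "p \<in> h ` X"
    proof (rule ccontr)
      assume pn: "p \<notin> h ` X"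
      define A0 where "A0 = X - {GZero}"
      have e1: "h ` X = h ` A0 \<union> {h GZero}" using zX by (auto simp: A0_def)
      have "\<sigma> closure_of (h ` X) = \<sigma> closure_of (h ` A0) \<union> \<sigma> closure_of {h GZero}"
        unfolding e1 by (rule closure_of_Un)
      then have "\<sigma> closure_of (h ` X) = \<sigma> closure_of (h ` A0) \<union> {h GZero}"
        using closure_of_singleton[OF Hausdorff_imp_t1_space[OF H], of "h GZero"] zt by simp
      then have p0: "p \<in> \<sigma> closure_of (h ` A0)" using p pn zX by auto
      have pz: "p \<noteq> h GZero" using pn zX by auto
      have A0e: "x = GElem (lp x) (rp x)" "is_path V Ed s r (lp x)" "is_path V Ed s r (rp x)"
        "path_range r (lp x) = path_range r (rp x)" if "x \<in> A0" for x
        using carrier_elem[of x V Ed s r] that by (auto simp: A0_def XG)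
      have A0X: "A0 \<subseteq> X" by (auto simp: A0_def)
      have rV: "path_range r (lp x) \<in> V" if "x \<in> A0" for x using path_range_in_V[OF graph(2) A0e(2)[OF that]] .
      obtain w where p1: "p \<in> \<sigma> closure_of (h ` {x\<in>A0. path_range r (lp x) = w})"
      proof (rule ccontr)
        assume "\<not> thesis"
        then have no: "\<And>w. p \<notin> \<sigma> closure_of (h ` {x\<in>A0. path_range r (lp x) = w})" using that by blast
        have "p = h GZero"
        proof (rule key_escape[OF ts cs hX inj mulX hom zX zero A0X,
              where idx = "\<lambda>x. path_range r (lp x)" and \<iota> = vtx
              and ga = "\<lambda>x. GElem (lp x) (path_range r (lp x), [])"
              and gb = "\<lambda>x. GElem (path_range r (lp x), []) (rp x)"])
          fix x assume x: "x \<in> A0"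
          have pr: "is_path V Ed s r (path_range r (lp x), [])" using rV[OF x] by (simp add: is_path_def)
          have rr: "path_range r (path_range r (lp x), []) = path_range r (lp x)" by (simp add: path_range_def)
          show "GElem (lp x) (path_range r (lp x), []) \<in> X \<and> vtx (path_range r (lp x)) \<in> X \<and>
                GElem (path_range r (lp x), []) (rp x) \<in> X"
            using pr rr A0e[OF x] vtx_in[OF rV[OF x], of Ed s r] unfolding XG by auto
          show "gis_mult (gis_mult (GElem (lp x) (path_range r (lp x), [])) (vtx (path_range r (lp x))))
                  (GElem (path_range r (lp x), []) (rp x)) = x"
            using fac_vertex[of r "lp x" _ "rp x"] A0e(1)[OF x] by simp
          show "gis_mult (vtx (path_range r (lp x))) (vtx (path_range r (lp x))) = vtx (path_range r (lp x))"
            by (rule vtx_idem)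
        next
          fix x y assume "path_range r (lp x) \<noteq> path_range r (lp y)"
          then show "gis_mult (vtx (path_range r (lp x))) (vtx (path_range r (lp y))) = GZero" by (rule vtx_orth)
        next
          show "inj_on vtx ((\<lambda>x. path_range r (lp x)) ` A0)" by (auto simp: inj_on_def vtx_def)
        next
          fix \<Phi> :: "'v set" assume "finite \<Phi>"
          then show "p \<in> \<sigma> closure_of (h ` {x \<in> A0. path_range r (lp x) \<notin> \<Phi>})"
            using split_escape[OF p0 no] by blast
        qed
        then show False using pz by simp
      qed
      define A1 where "A1 = {x\<in>A0. path_range r (lp x) = w}"
      have A1X: "A1 \<subseteq> X" using A0X by (auto simp: A1_def)
      obtain u where p2: "p \<in> \<sigma> closure_of (h ` {x\<in>A1. lp x = u})"
      proof (rule ccontr)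
        assume "\<not> thesis"
        then have no: "\<And>u. p \<notin> \<sigma> closure_of (h ` {x\<in>A1. lp x = u})" using that by blast
        have "p = h GZero"
        proof (rule key_escape[OF ts cs hX inj mulX hom zX zero A1X,
              where idx = lp and \<iota> = "\<lambda>u. GElem u u"
              and ga = "\<lambda>x. GElem (lp x) (lp x)" and gb = "\<lambda>x. x"])
          fix x assume x: "x \<in> A1"
          then have x0: "x \<in> A0" by (simp add: A1_def)
          show "GElem (lp x) (lp x) \<in> X \<and> GElem (lp x) (lp x) \<in> X \<and> x \<in> X"
            using A0e[OF x0] x0 A0X unfolding XG by auto
          show "gis_mult (gis_mult (GElem (lp x) (lp x)) (GElem (lp x) (lp x))) x = x"
            using fac_left[of "lp x" "rp x"] A0e(1)[OF x0] by metis
          show "gis_mult (GElem (lp x) (lp x)) (GElem (lp x) (lp x)) = GElem (lp x) (lp x)"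
            by (rule self_idem)
        next
          fix x y assume x: "x \<in> A1" and y: "y \<in> A1" and ne: "lp x \<noteq> lp y"
          have x0: "x \<in> A0" and y0: "y \<in> A0" using x y by (auto simp: A1_def)
          show "gis_mult (GElem (lp x) (lp x)) (GElem (lp y) (lp y)) = GZero"
            by (rule orth_paths[OF graph(2) acyc A0e(2)[OF x0] A0e(2)[OF y0] _ ne])
               (use x y in \<open>auto simp: A1_def\<close>)
        next
          show "inj_on (\<lambda>u. GElem u u) (lp ` A1)" by (auto simp: inj_on_def)
        next
          fix \<Phi> :: "('v,'e) path set" assume "finite \<Phi>"
          then show "p \<in> \<sigma> closure_of (h ` {x \<in> A1. lp x \<notin> \<Phi>})"
            using split_escape[OF p1[folded A1_def] no] by blast
        qed
        then show False using pz by simp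
      qed
      define A2 where "A2 = {x\<in>A1. lp x = u}"
      have A2X: "A2 \<subseteq> X" using A1X by (auto simp: A2_def)
      obtain v where p3: "p \<in> \<sigma> closure_of (h ` {x\<in>A2. rp x = v})"
      proof (rule ccontr)
        assume "\<not> thesis"
        then have no: "\<And>v. p \<notin> \<sigma> closure_of (h ` {x\<in>A2. rp x = v})" using that by blast
        have "p = h GZero"
        proof (rule key_escape[OF ts cs hX inj mulX hom zX zero A2X,
              where idx = rp and \<iota> = "\<lambda>u. GElem u u"
              and ga = "\<lambda>x. x" and gb = "\<lambda>x. GElem (rp x) (rp x)"])
          fix x assume x: "x \<in> A2"
          then have x0: "x \<in> A0" by (simp add: A1_def A2_def)
          show "x \<in> X \<and> GElem (rp x) (rp x) \<in> X \<and> GElem (rp x) (rp x) \<in> X"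
            using A0e[OF x0] x0 A0X unfolding XG by auto
          show "gis_mult (gis_mult x (GElem (rp x) (rp x))) (GElem (rp x) (rp x)) = x"
            using fac_right[of "lp x" "rp x"] A0e(1)[OF x0] by metis
          show "gis_mult (GElem (rp x) (rp x)) (GElem (rp x) (rp x)) = GElem (rp x) (rp x)"
            by (rule self_idem)
        next
          fix x y assume x: "x \<in> A2" and y: "y \<in> A2" and ne: "rp x \<noteq> rp y"
          have x0: "x \<in> A0" and y0: "y \<in> A0" using x y by (auto simp: A1_def A2_def)
          have rr: "path_range r (rp x) = path_range r (rp y)"
            using x y A0e(4)[OF x0] A0e(4)[OF y0] by (auto simp: A1_def A2_def)
          show "gis_mult (GElem (rp x) (rp x)) (GElem (rp y) (rp y)) = GZero"
            using orth_paths[OF graph(2) acyc A0e(3)[OF x0] A0e(3)[OF y0] rr ne] .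
        next
          show "inj_on (\<lambda>u. GElem u u) (rp ` A2)" by (auto simp: inj_on_def)
        next
          fix \<Phi> :: "('v,'e) path set" assume "finite \<Phi>"
          then show "p \<in> \<sigma> closure_of (h ` {x \<in> A2. rp x \<notin> \<Phi>})"
            using split_escape[OF p2[folded A2_def] no] by blast
        qed
        then show False using pz by simp
      qed
      define A3 where "A3 = {x\<in>A2. rp x = v}"
      have p3': "p \<in> \<sigma> closure_of (h ` A3)" using p3 by (simp add: A3_def)
      have "A3 \<noteq> {}"
      proof
        assume "A3 = {}"
        then show False using p3' by simp
      qed
      then obtain x where x: "x \<in> A3" by auto
      have "A3 \<subseteq> {x}"
      proof
        fix y assume y: "y \<in> A3"
        have "x = GElem u v" "y = GElem u v"
          using A0e(1)[of x] A0e(1)[of y] x y by (auto simp: A1_def A2_def A3_def)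
        then show "y \<in> {x}" by simp
      qed
      then have "\<sigma> closure_of (h ` A3) \<subseteq> \<sigma> closure_of {h x}" by (intro closure_of_mono) auto
      also have "\<dots> \<subseteq> {h x}" using closure_of_singleton[OF Hausdorff_imp_t1_space[OF H]] by simp
      finally have "p = h x" using p3' by blast
      moreover have "x \<in> X" using x A2X by (auto simp: A3_def)
      ultimately show False using pn by auto
    qed
  qed
  have "closedin \<sigma> (h ` X)" using clo hX closure_of_subset_eq by blast
  then have "compactin \<sigma> (h ` X)" using closedin_compact_space[OF cs] by blast
  then have "compactin (subtopology \<sigma> (h ` X)) (h ` X)" by (simp add: compactin_subtopology)
  moreover have "X \<subseteq> topspace \<tau>" by (simp add: X_def)
  ultimately have "compactin \<tau> X" using homeomorphic_map_compactness[OF hm] by blast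
  then show "compact_space \<tau>" by (simp add: compact_space_def X_def)
qed

end
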